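(* Let $f,g\in W^{1,\infty}_{0,1}(\mathbb R\setminus\{0\})$ and define $$K[f,g](\eta)=\int_{\mathbb R}e^{3i\eta\lambda^2/4}f\Big(\frac{\eta+\lambda}{2}\Big)g\Big(\frac{\eta-\lambda}{2}\Big)d\lambda .$$ Then for all $\eta\in\mathbb R\setminus\{0\}$, $$|K(f,g)(\eta)|\lesssim\frac{1}{|\eta|^{1/2}}\|f\|_{W^{1,\infty}_{0,1}(\mathbb R\setminus\{0\})}\|g\|_{W^{1,\infty}_{0,1}(\mathbb R\setminus\{0\})}.$$
   Context: $\langle\xi\rangle=(1+\xi^2)^{1/2}$; $\|v\|_{W^{1,\infty}_{0,1}(\Omega)}=\|v\|_{L^\infty(\Omega)}+\|\langle\xi\rangle\partial_\xi v\|_{L^\infty(\Omega)}$. The integral defining $K$ is understood as an (improper) oscillatory integral. *)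

theory Defs
  imports "HOL-Analysis.Analysis"
begin

definition jbr :: "real \<Rightarrow> real" where
  "jbr x = sqrt (1 + x\<^sup>2)"

text \<open>W01_bound f h A B: f lies in W^{1,infinity}_{0,1}(R minus 0), with weak derivative h
  (f locally absolutely continuous on each half-line with derivative h),
  sup |f| <= A and sup |<x> h x| <= B.  Then the norm of f is the infimum of A + B
  over all such data.\<close>
definition W01_bound :: "(real \<Rightarrow> complex) \<Rightarrow> (real \<Rightarrow> complex) \<Rightarrow> real \<Rightarrow> real \<Rightarrow> bool" where
  "W01_bound f h A B \<longleftrightarrow>
     (\<forall>x. x \<noteq> 0 \<longrightarrow> norm (f x) \<le> A) \<and>
     (\<forall>x. x \<noteq> 0 \<longrightarrow> jbr x * norm (h x) \<le> B) \<and>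
     (\<forall>a b. (0 < a \<and> a \<le> b) \<or> (a \<le> b \<and> b < 0) \<longrightarrow> (h has_integral (f b - f a)) {a..b})"

text \<open>Truncated integral defining K[f,g](eta); K itself is its limit as R tends to infinity.\<close>
definition Ktrunc :: "(real \<Rightarrow> complex) \<Rightarrow> (real \<Rightarrow> complex) \<Rightarrow> real \<Rightarrow> real \<Rightarrow> complex" where
  "Ktrunc f g \<eta> R = integral {-R..R}
     (\<lambda>l. exp (\<i> * of_real (3 * \<eta> * l\<^sup>2 / 4)) * f ((\<eta> + l) / 2) * g ((\<eta> - l) / 2))"

end

theory Submission
  imports Defs
begin


definition ii :: "(real \<Rightarrow> complex) \<Rightarrow> (real \<Rightarrow> complex) \<Rightarrow> real \<Rightarrow> real \<Rightarrow> bool" where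
  "ii u U a b \<longleftrightarrow> (\<forall>s t. a \<le> s \<longrightarrow> s \<le> t \<longrightarrow> t \<le> b \<longrightarrow> (u has_integral (U t - U s)) {s..t})"

lemma ii_lip:
  assumes "ii u U a b" "\<And>t. t \<in> {a..b} \<Longrightarrow> norm (u t) \<le> K" "0 \<le> K" "a \<le> s" "s \<le> t" "t \<le> b"
  shows "norm (U t - U s) \<le> K * (t - s)"
proof -
  have "(u has_integral (U t - U s)) {s..t}" using assms(1,4-6) unfolding ii_def by blast
  from has_integral_bound_real[OF assms(3) _ this, of "{}"] assms(2,4-6)
  show ?thesis by auto
qed

lemma ii_cont:
  assumes "ii u U a b" "\<And>t. t \<in> {a..b} \<Longrightarrow> norm (u t) \<le> K" "0 \<le> K"
  shows "continuous_on {a..b} U"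
proof (rule lipschitz_on_continuous_on)
  show "K-lipschitz_on {a..b} U"
    unfolding lipschitz_on_def
  proof (intro conjI ballI)
    fix x y assume xy: "x \<in> {a..b}" "y \<in> {a..b}"
    show "dist (U x) (U y) \<le> K * dist x y"
    proof (cases "x \<le> y")
      case True
      then show ?thesis using ii_lip[OF assms, of x y] xy by (simp add: dist_norm norm_minus_commute)
    next
      case False
      then show ?thesis using ii_lip[OF assms, of y x] xy by (simp add: dist_norm norm_minus_commute)
    qed
  qed (use assms in auto)
qed

lemma ii_bounded:
  assumes "ii u U a b" "\<And>t. t \<in> {a..b} \<Longrightarrow> norm (u t) \<le> K" "0 \<le> K" "t \<in> {a..b}"
  shows "norm (U t) \<le> norm (U a) + K * (b - a)"
proof -
  have "norm (U t - U a) \<le> K * (t - a)" using ii_lip[OF assms(1-3), of a t] assms(4) by auto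
  also have "\<dots> \<le> K * (b - a)" using assms by (intro mult_left_mono) auto
  finally show ?thesis by (metis add_le_cancel_left diff_add_cancel norm_triangle_ineq order_trans add.commute)
qed

lemma bdd_meas_int:
  fixes w :: "real \<Rightarrow> complex"
  assumes "w \<in> borel_measurable (lebesgue_on {s..t})" "\<And>r. r \<in> {s..t} \<Longrightarrow> norm (w r) \<le> C"
  shows "w integrable_on {s..t}"
  by (rule measurable_bounded_by_integrable_imp_integrable[OF assms(1) _ assms(2)])
     (auto intro!: integrable_on_const)

lemma ii_int_mult:
  assumes "ii u U a b" "\<And>t. t \<in> {a..b} \<Longrightarrow> norm (u t) \<le> K" "0 \<le> K"
    and "continuous_on {a..b} V" and "a \<le> s" "s \<le> t" "t \<le> b"
  shows "(\<lambda>r. u r * V r) integrable_on {s..t}"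
proof -
  have "compact (V ` {s..t})" using assms(4-7) by (intro compact_continuous_image) (auto elim: continuous_on_subset)
  then obtain M where M: "\<And>r. r \<in> {s..t} \<Longrightarrow> norm (V r) \<le> M"
    using compact_imp_bounded bounded_iff by (metis image_eqI)
  have ui: "u integrable_on {s..t}" using assms(1,5-7) unfolding ii_def by blast
  have m1: "u \<in> borel_measurable (lebesgue_on {s..t})" by (rule integrable_imp_measurable[OF ui])
  have m2: "V \<in> borel_measurable (lebesgue_on {s..t})"
    using assms(4-7) by (intro continuous_imp_measurable_on_sets_lebesgue) (auto elim: continuous_on_subset)
  show ?thesis
  proof (rule bdd_meas_int)
    show "(\<lambda>r. u r * V r) \<in> borel_measurable (lebesgue_on {s..t})" using m1 m2 by measurable
    fix r assume r: "r \<in> {s..t}"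
    have "norm (u r * V r) = norm (u r) * norm (V r)" by (simp add: norm_mult)
    also have "\<dots> \<le> K * M" using assms(2)[of r] M[OF r] r assms(3,5-7)
      by (intro mult_mono) auto
    finally show "norm (u r * V r) \<le> K * M" .
  qed
qed


lemma small_zero:
  fixes x :: complex
  assumes "\<And>n::nat. n \<ge> 1 \<Longrightarrow> norm x \<le> c / real n"
  shows "x = 0"
proof (rule ccontr)
  assume "x \<noteq> 0"
  then have p: "norm x > 0" by simp
  obtain n :: nat where n: "c / norm x < real n" using reals_Archimedean2 by blast
  have "c \<ge> 0" using assms[of 1] p by (simp, metis norm_ge_zero order_trans)
  then have n1: "n \<ge> 1" using n p by (cases n) (auto simp: field_simps)
  have "c / real n < norm x" using n p n1 by (simp add: field_simps mult.commute)
  with assms[OF n1] show False by simp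
qed

lemma ii_prod:
  assumes iu: "ii u U a b" and iv: "ii v V a b"
    and bu: "\<And>t. t \<in> {a..b} \<Longrightarrow> norm (u t) \<le> K" and bv: "\<And>t. t \<in> {a..b} \<Longrightarrow> norm (v t) \<le> K"
    and K: "0 \<le> K"
  shows "ii (\<lambda>t. u t * V t + U t * v t) (\<lambda>t. U t * V t) a b"
proof -
  have cU: "continuous_on {a..b} U" by (rule ii_cont[OF iu bu K])
  have cV: "continuous_on {a..b} V" by (rule ii_cont[OF iv bv K])
  have i1: "(\<lambda>r. u r * V r) integrable_on {s..t}" if "a \<le> s" "s \<le> t" "t \<le> b" for s t
    by (rule ii_int_mult[OF iu bu K cV that])
  have i2: "(\<lambda>r. U r * v r) integrable_on {s..t}" if "a \<le> s" "s \<le> t" "t \<le> b" for s t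
    using ii_int_mult[OF iv bv K cU that] by (simp add: mult.commute)
  define w where "w = (\<lambda>r. u r * V r + U r * v r)"
  have wi: "w integrable_on {s..t}" if "a \<le> s" "s \<le> t" "t \<le> b" for s t
    unfolding w_def using i1[OF that] i2[OF that] by (rule integrable_add)
  define D where "D = (\<lambda>s t. U t * V t - U s * V s - integral {s..t} w)"
  have loc: "norm (D s t) \<le> 2 * K * K * (t - s)^2" if st: "a \<le> s" "s \<le> t" "t \<le> b" for s t
  proof -
    have hu: "(u has_integral (U t - U s)) {s..t}" using iu st unfolding ii_def by blast
    have hv: "(v has_integral (V t - V s)) {s..t}" using iv st unfolding ii_def by blast
    have h1: "((\<lambda>r. u r * V s - u r * V r) has_integral ((U t - U s) * V s - integral {s..t} (\<lambda>r. u r * V r))) {s..t}"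
      by (intro has_integral_diff has_integral_mult_left hu integrable_integral i1 st)
    have h2: "((\<lambda>r. U t * v r - U r * v r) has_integral (U t * (V t - V s) - integral {s..t} (\<lambda>r. U r * v r))) {s..t}"
      by (intro has_integral_diff has_integral_mult_right hv integrable_integral i2 st)
    have b1: "norm ((U t - U s) * V s - integral {s..t} (\<lambda>r. u r * V r)) \<le> (K * (K * (t - s))) * Henstock_Kurzweil_Integration.content {s..t}"
    proof (rule has_integral_bound_real[OF _ _ h1, where S="{}"])
      show "0 \<le> K * (K * (t - s))" using K st by simp
      fix r assume r: "r \<in> {s..t} - {}"
      have "norm (u r * V s - u r * V r) = norm (u r) * norm (V r - V s)"
        by (metis norm_mult right_diff_distrib norm_minus_commute)
      also have "\<dots> \<le> K * (K * (t - s))"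
      proof (intro mult_mono)
        show "norm (u r) \<le> K" using bu r st by auto
        have "norm (V r - V s) \<le> K * (r - s)" using ii_lip[OF iv bv K, of s r] r st by auto
        also have "\<dots> \<le> K * (t - s)" using K r by (intro mult_left_mono) auto
        finally show "norm (V r - V s) \<le> K * (t - s)" .
      qed (use K st in auto)
      finally show "norm (u r * V s - u r * V r) \<le> K * (K * (t - s))" .
    qed simp
    have b2: "norm (U t * (V t - V s) - integral {s..t} (\<lambda>r. U r * v r)) \<le> (K * (K * (t - s))) * Henstock_Kurzweil_Integration.content {s..t}"
    proof (rule has_integral_bound_real[OF _ _ h2, where S="{}"])
      show "0 \<le> K * (K * (t - s))" using K st by simp
      fix r assume r: "r \<in> {s..t} - {}"
      have "norm (U t * v r - U r * v r) = norm (U t - U r) * norm (v r)"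
        by (metis norm_mult left_diff_distrib)
      also have "\<dots> \<le> (K * (t - s)) * K"
      proof (intro mult_mono)
        show "norm (v r) \<le> K" using bv r st by auto
        have "norm (U t - U r) \<le> K * (t - r)" using ii_lip[OF iu bu K, of r t] r st by auto
        also have "\<dots> \<le> K * (t - s)" using K r by (intro mult_left_mono) auto
        finally show "norm (U t - U r) \<le> K * (t - s)" .
      qed (use K st in auto)
      finally show "norm (U t * v r - U r * v r) \<le> K * (K * (t - s))" by (simp add: mult_ac)
    qed simp
    have eq: "D s t = ((U t - U s) * V s - integral {s..t} (\<lambda>r. u r * V r)) +
                      (U t * (V t - V s) - integral {s..t} (\<lambda>r. U r * v r))"
      unfolding D_def w_def using integral_add[OF i1[OF st] i2[OF st]]
      by (simp add: algebra_simps)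
    have "norm (D s t) \<le> (K * (K * (t - s))) * Henstock_Kurzweil_Integration.content {s..t} + (K * (K * (t - s))) * Henstock_Kurzweil_Integration.content {s..t}"
      unfolding eq by (rule order_trans[OF norm_triangle_ineq add_mono[OF b1 b2]])
    also have "\<dots> = 2 * K * K * (t - s)^2" using st by (simp add: power2_eq_square algebra_simps)
    finally show ?thesis .
  qed
  have add: "D s r + D r t = D s t" if "a \<le> s" "s \<le> r" "r \<le> t" "t \<le> b" for s r t
  proof -
    have "integral {s..r} w + integral {r..t} w = integral {s..t} w"
      using that wi[of s t] by (intro Henstock_Kurzweil_Integration.integral_combine) auto
    then show ?thesis unfolding D_def by (simp add: algebra_simps)
  qed
  have zero: "D s t = 0" if st: "a \<le> s" "s \<le> t" "t \<le> b" for s t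
  proof (rule small_zero)
    fix n :: nat assume n: "n \<ge> 1"
    define h where "h = (t - s) / n"
    have h0: "h \<ge> 0" using st n unfolding h_def by simp
    have nh: "real n * h = t - s" using n unfolding h_def by simp
    have tele: "D s (s + real m * h) = (\<Sum>k<m. D (s + real k * h) (s + real (Suc k) * h))" if "m \<le> n" for m
      using that
    proof (induction m)
      case 0
      then show ?case unfolding D_def by simp
    next
      case (Suc m)
      have le: "real (Suc m) * h \<le> t - s" using Suc.prems h0 nh
        by (metis mult_right_mono of_nat_le_iff)
      have le2: "real m * h \<le> real (Suc m) * h" using h0 by (intro mult_right_mono) auto
      have "D s (s + real (Suc m) * h) = D s (s + real m * h) + D (s + real m * h) (s + real (Suc m) * h)"
        using add[of s "s + real m * h" "s + real (Suc m) * h"] st le le2 h0 by (simp add: zero_le_mult_iff)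
      then show ?case using Suc by simp
    qed
    have "D s t = (\<Sum>k<n. D (s + real k * h) (s + real (Suc k) * h))"
      using tele[of n] nh by simp
    also have "norm \<dots> \<le> (\<Sum>k<n. 2 * K * K * h^2)"
    proof (rule order_trans[OF norm_sum sum_mono])
      fix k assume k: "k \<in> {..<n}"
      have a1: "real k * h \<le> real (Suc k) * h" using h0 by (intro mult_right_mono) auto
      have a2: "real (Suc k) * h \<le> t - s" using k h0 nh by (metis lessThan_iff mult_right_mono of_nat_le_iff Suc_leI)
      have "norm (D (s + real k * h) (s + real (Suc k) * h)) \<le> 2 * K * K * ((s + real (Suc k) * h) - (s + real k * h))^2"
        proof (rule loc)
        show "a \<le> s + real k * h" using st h0 by (simp add: add_increasing2)
      qed (use st a1 a2 in auto)
      also have "(s + real (Suc k) * h) - (s + real k * h) = h" by (simp add: algebra_simps)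
      finally show "norm (D (s + real k * h) (s + real (Suc k) * h)) \<le> 2 * K * K * h^2" .
    qed
    also have "\<dots> = 2 * K * K * (t - s)^2 / real n"
      using n unfolding h_def by (simp add: power2_eq_square field_simps)
    finally show "norm (D s t) \<le> 2 * K * K * (t - s)^2 / real n" .
  qed
  show ?thesis unfolding ii_def
  proof (intro allI impI)
    fix s t assume st: "a \<le> s" "s \<le> t" "t \<le> b"
    have "(w has_integral integral {s..t} w) {s..t}" using wi[OF st] by (rule integrable_integral)
    moreover have "integral {s..t} w = U t * V t - U s * V s" using zero[OF st] unfolding D_def by simp
    ultimately show "((\<lambda>t. u t * V t + U t * v t) has_integral U t * V t - U s * V s) {s..t}"
      unfolding w_def by simp
  qed
qed



lemma jbr_ge1: "jbr x \<ge> 1"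
  unfolding jbr_def by simp

lemma jbr_ge_abs: "jbr x \<ge> \<bar>x\<bar>"
  unfolding jbr_def by (metis add_le_cancel_right le_add_same_cancel2 real_sqrt_abs real_sqrt_le_mono zero_le_one add.commute)

lemma W_basic:
  assumes "W01_bound f h A B"
  shows "0 \<le> A" "0 \<le> B" "\<And>x. x \<noteq> 0 \<Longrightarrow> norm (f x) \<le> A"
    "\<And>x. x \<noteq> 0 \<Longrightarrow> norm (h x) \<le> B" "\<And>x. x \<noteq> 0 \<Longrightarrow> \<bar>x\<bar> * norm (h x) \<le> B"
proof -
  have fA: "\<And>x. x \<noteq> 0 \<Longrightarrow> norm (f x) \<le> A" and hB: "\<And>x. x \<noteq> 0 \<Longrightarrow> jbr x * norm (h x) \<le> B"
    using assms unfolding W01_bound_def by auto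
  show "\<And>x. x \<noteq> 0 \<Longrightarrow> norm (f x) \<le> A" by (rule fA)
  show "0 \<le> A" using fA[of 1] by (metis norm_ge_zero order_trans one_neq_zero)
  show "\<And>x. x \<noteq> 0 \<Longrightarrow> norm (h x) \<le> B"
  proof -
    fix x :: real assume "x \<noteq> 0"
    have "norm (h x) \<le> jbr x * norm (h x)" using jbr_ge1[of x] by (simp add: mult_le_cancel_right1)
    then show "norm (h x) \<le> B" using hB[OF \<open>x \<noteq> 0\<close>] by linarith
  qed
  show "\<And>x. x \<noteq> 0 \<Longrightarrow> \<bar>x\<bar> * norm (h x) \<le> B"
  proof -
    fix x :: real assume "x \<noteq> 0"
    have "\<bar>x\<bar> * norm (h x) \<le> jbr x * norm (h x)" using jbr_ge_abs[of x] by (simp add: mult_right_mono)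
    then show "\<bar>x\<bar> * norm (h x) \<le> B" using hB[OF \<open>x \<noteq> 0\<close>] by linarith
  qed
  then show "0 \<le> B" by (metis abs_ge_zero mult_nonneg_nonneg norm_ge_zero order_trans one_neq_zero)
qed

lemma W_lip:
  assumes "W01_bound f h A B" "s \<le> t" "0 < s \<or> t < 0"
  shows "norm (f t - f s) \<le> B * (t - s)"
proof -
  have "(h has_integral (f t - f s)) {s..t}" using assms unfolding W01_bound_def by blast
  moreover have "\<And>x. x \<in> {s..t} - {} \<Longrightarrow> norm (h x) \<le> B" using W_basic(4)[OF assms(1)] assms(2,3) by fastforce
  ultimately show ?thesis using has_integral_bound_real[of B "{}" h "f t - f s" s t] W_basic(2)[OF assms(1)] assms(2)
    by auto
qed

lemma W_cont:
  assumes "W01_bound f h A B" "x \<noteq> 0"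
  shows "isCont f x"
proof -
  have lp: "B-lipschitz_on S f" if S: "S = {0<..} \<or> S = {..<0}" for S :: "real set"
    unfolding lipschitz_on_def
  proof (intro conjI ballI)
    show "0 \<le> B" by (rule W_basic(2)[OF assms(1)])
    fix a b assume ab: "a \<in> S" "b \<in> S"
    show "dist (f a) (f b) \<le> B * dist a b"
    proof (cases "a \<le> b")
      case True
      then show ?thesis using W_lip[OF assms(1) True] ab S by (auto simp: dist_norm norm_minus_commute)
    next
      case False
      then show ?thesis using W_lip[OF assms(1), of b a] ab S by (auto simp: dist_norm norm_minus_commute)
    qed
  qed
  show ?thesis
  proof (cases "x > 0")
    case True
    have "continuous_on {0<..} f" using lp by (intro lipschitz_on_continuous_on) blast
    then show ?thesis using True by (subst (asm) continuous_on_eq_continuous_at) auto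
  next
    case False
    then have "x < 0" using assms(2) by simp
    have "continuous_on {..<0} f" using lp by (intro lipschitz_on_continuous_on) blast
    then show ?thesis using \<open>x < 0\<close> by (subst (asm) continuous_on_eq_continuous_at) auto
  qed
qed

lemma comp_plus:
  assumes "W01_bound f h A B" "\<And>l. l \<in> {x..y} \<Longrightarrow> \<eta> + l \<noteq> 0"
  shows "ii (\<lambda>l. h ((\<eta> + l) / 2) / 2) (\<lambda>l. f ((\<eta> + l) / 2)) x y"
  unfolding ii_def
proof (intro allI impI)
  fix s t assume st: "x \<le> s" "s \<le> t" "t \<le> y"
  have sgn: "0 < (\<eta> + s) / 2 \<or> (\<eta> + t) / 2 < 0"
  proof (rule ccontr)
    assume "\<not> ?thesis"
    then have "-\<eta> \<in> {x..y}" using st by auto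
    then show False using assms(2)[of "-\<eta>"] by simp
  qed
  have le: "(\<eta> + s) / 2 \<le> (\<eta> + t) / 2" using st by simp
  have hi: "(h has_integral (f ((\<eta> + t) / 2) - f ((\<eta> + s) / 2))) (cbox ((\<eta> + s) / 2) ((\<eta> + t) / 2))"
    using assms(1) sgn le unfolding W01_bound_def by auto
  have "((\<lambda>l. h ((1/2) *\<^sub>R l + \<eta>/2)) has_integral ((f ((\<eta> + t) / 2) - f ((\<eta> + s) / 2)) /\<^sub>R (1/2) ^ DIM(real)))
     (cbox (((\<eta> + s) / 2 - \<eta>/2) /\<^sub>R (1/2)) (((\<eta> + t) / 2 - \<eta>/2) /\<^sub>R (1/2)))"
    by (rule has_integral_affinity'[OF hi]) simp
  note ha = this
  have "((\<lambda>l. h ((\<eta> + l) / 2)) has_integral (2 * (f ((\<eta> + t) / 2) - f ((\<eta> + s) / 2)))) {s..t}"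
  proof -
    have e: "(\<lambda>l. h ((1/2) *\<^sub>R l + \<eta>/2)) = (\<lambda>l. h ((\<eta> + l) / 2))"
      by (rule ext) (simp add: add_divide_distrib add.commute)
    have e2: "((f ((\<eta> + t) / 2) - f ((\<eta> + s) / 2)) /\<^sub>R (1/2) ^ DIM(real)) = 2 * (f ((\<eta> + t) / 2) - f ((\<eta> + s) / 2))"
      by (simp add: scaleR_conv_of_real)
    have e3: "cbox (((\<eta> + s) / 2 - \<eta>/2) /\<^sub>R (1/2)) (((\<eta> + t) / 2 - \<eta>/2) /\<^sub>R (1/2)) = {s..t}"
      by (simp add: add_divide_distrib)
    show ?thesis using ha unfolding e e2 e3 .
  qed
  note hh = this
  have eq1: "(\<lambda>l. 1/2 * h ((\<eta> + l) / 2)) = (\<lambda>l. h ((\<eta> + l) / 2) / 2)" by simp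
  have eq2: "1/2 * (2 * (f ((\<eta> + t) / 2) - f ((\<eta> + s) / 2))) = f ((\<eta> + t) / 2) - f ((\<eta> + s) / 2)" by simp
  show "((\<lambda>l. h ((\<eta> + l) / 2) / 2) has_integral (f ((\<eta> + t) / 2) - f ((\<eta> + s) / 2))) {s..t}"
    using has_integral_mult_right[OF hh, of "1/2"] unfolding eq1 eq2 .
qed

lemma comp_minus:
  assumes "W01_bound f h A B" "\<And>l. l \<in> {x..y} \<Longrightarrow> \<eta> - l \<noteq> 0"
  shows "ii (\<lambda>l. - (h ((\<eta> - l) / 2) / 2)) (\<lambda>l. f ((\<eta> - l) / 2)) x y"
  unfolding ii_def
proof (intro allI impI)
  fix s t assume st: "x \<le> s" "s \<le> t" "t \<le> y"
  have "ii (\<lambda>l. h ((\<eta> + l) / 2) / 2) (\<lambda>l. f ((\<eta> + l) / 2)) (-y) (-x)"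
  proof (rule comp_plus[OF assms(1)])
    fix l assume "l \<in> {-y..-x}"
    then have "-l \<in> {x..y}" by auto
    from assms(2)[OF this] show "\<eta> + l \<noteq> 0" by simp
  qed
  note X = this
  have "((\<lambda>l. h ((\<eta> + l) / 2) / 2) has_integral (f ((\<eta> + -s) / 2) - f ((\<eta> + -t) / 2))) {-t..-s}"
    using X[unfolded ii_def, rule_format, of "-t" "-s"] st by simp
  then have "((\<lambda>l. h ((\<eta> - l) / 2) / 2) has_integral (f ((\<eta> - s) / 2) - f ((\<eta> - t) / 2))) {s..t}"
    using has_integral_reflect_real[where f="\<lambda>l. h ((\<eta> - l) / 2) / 2" and a=s and b=t] by simp
  from has_integral_neg[OF this]
  show "((\<lambda>l. - (h ((\<eta> - l) / 2) / 2)) has_integral (f ((\<eta> - t) / 2) - f ((\<eta> - s) / 2))) {s..t}"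
    by simp
qed



definition Phi :: "(real \<Rightarrow> complex) \<Rightarrow> (real \<Rightarrow> complex) \<Rightarrow> real \<Rightarrow> real \<Rightarrow> complex" where
  "Phi f g \<eta> = (\<lambda>l. exp (\<i> * of_real (3 * \<eta> * l\<^sup>2 / 4)) * f ((\<eta> + l) / 2) * g ((\<eta> - l) / 2))"

lemma Ktrunc_Phi: "Ktrunc f g \<eta> R = integral {-R..R} (Phi f g \<eta>)"
  unfolding Ktrunc_def Phi_def by simp

lemma Phi_bound:
  assumes "W01_bound f hf A B" "W01_bound g hg A' B'" "\<eta> + l \<noteq> 0" "\<eta> - l \<noteq> 0"
  shows "norm (Phi f g \<eta> l) \<le> A * A'"
proof -
  have "norm (Phi f g \<eta> l) = norm (f ((\<eta> + l) / 2)) * norm (g ((\<eta> - l) / 2))"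
    unfolding Phi_def by (simp add: norm_mult)
  also have "\<dots> \<le> A * A'"
    using W_basic[OF assms(1)] W_basic[OF assms(2)] assms(3,4) by (intro mult_mono) auto
  finally show ?thesis .
qed

lemma Phi_int:
  assumes "W01_bound f hf A B" "W01_bound g hg A' B'"
  shows "Phi f g \<eta> integrable_on {a..b}"
proof -
  define S where "S = {a..b} - {-\<eta>, \<eta>}"
  have S: "S \<in> sets lebesgue" unfolding S_def
  proof (rule sets.Diff)
    show "{a..b} \<in> sets lebesgue" by simp
    show "{-\<eta>, \<eta>} \<in> sets lebesgue" by (intro negligible_imp_sets negligible_finite) simp
  qed
  have cont: "continuous_on S (Phi f g \<eta>)"
  proof (rule continuous_at_imp_continuous_on, intro ballI)
    fix l assume l: "l \<in> S"
    have c1: "isCont f ((\<eta> + l) / 2)" using W_cont[OF assms(1)] l unfolding S_def by auto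
    have c2: "isCont g ((\<eta> - l) / 2)" using W_cont[OF assms(2)] l unfolding S_def by auto
    have a1: "isCont (\<lambda>l. (\<eta> + l) / 2) l" by (auto intro!: continuous_intros)
    have d1: "isCont (\<lambda>l. f ((\<eta> + l) / 2)) l" using isCont_o2[OF a1 c1] .
    have a2: "isCont (\<lambda>l. (\<eta> - l) / 2) l" by (auto intro!: continuous_intros)
    have d2: "isCont (\<lambda>l. g ((\<eta> - l) / 2)) l" using isCont_o2[OF a2 c2] .
    show "isCont (Phi f g \<eta>) l" unfolding Phi_def
      by (auto intro!: continuous_intros d1 d2)
  qed
  have "Phi f g \<eta> integrable_on S"
  proof (rule measurable_bounded_by_integrable_imp_integrable)
    show "Phi f g \<eta> \<in> borel_measurable (lebesgue_on S)"
      by (rule continuous_imp_measurable_on_sets_lebesgue[OF cont S])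
    show "(\<lambda>_. A * A') integrable_on S"
      by (rule integrable_on_const) (use S in \<open>auto simp: S_def intro!: fmeasurableI2[of "{a..b}"]\<close>)
    show "\<And>x. x \<in> S \<Longrightarrow> norm (Phi f g \<eta> x) \<le> A * A'"
      using Phi_bound[OF assms] unfolding S_def by (auto simp: algebra_simps)
  qed (rule S)
  then show ?thesis
    by (rule integrable_spike_set) (auto simp: S_def intro: negligible_subset[of "{-\<eta>, \<eta>}"])
qed



definition bdd :: "(real \<Rightarrow> complex) \<Rightarrow> real \<Rightarrow> real \<Rightarrow> bool" where
  "bdd u a b \<longleftrightarrow> (\<exists>K. \<forall>t\<in>{a..b}. norm (u t) \<le> K)"

lemma ii_prod2:
  assumes iu: "ii u U a b" and bu: "bdd u a b" and iv: "ii v V a b" and bv: "bdd v a b"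
  shows "ii (\<lambda>t. u t * V t + U t * v t) (\<lambda>t. U t * V t) a b \<and> bdd (\<lambda>t. u t * V t + U t * v t) a b"
proof -
  obtain Ku Kv where Ku: "\<And>t. t \<in> {a..b} \<Longrightarrow> norm (u t) \<le> Ku" and Kv: "\<And>t. t \<in> {a..b} \<Longrightarrow> norm (v t) \<le> Kv"
    using bu bv unfolding bdd_def by blast
  define K where "K = \<bar>Ku\<bar> + \<bar>Kv\<bar>"
  have K0: "0 \<le> K" unfolding K_def by simp
  have bu': "\<And>t. t \<in> {a..b} \<Longrightarrow> norm (u t) \<le> K" using Ku unfolding K_def by (smt (verit))
  have bv': "\<And>t. t \<in> {a..b} \<Longrightarrow> norm (v t) \<le> K" using Kv unfolding K_def by (smt (verit))
  have "ii (\<lambda>t. u t * V t + U t * v t) (\<lambda>t. U t * V t) a b" by (rule ii_prod[OF iu iv bu' bv' K0])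
  moreover have "bdd (\<lambda>t. u t * V t + U t * v t) a b"
    unfolding bdd_def
  proof (intro exI ballI)
    fix t assume t: "t \<in> {a..b}"
    have nU: "norm (U t) \<le> norm (U a) + K * (b - a)" by (rule ii_bounded[OF iu bu' K0 t])
    have nV: "norm (V t) \<le> norm (V a) + K * (b - a)" by (rule ii_bounded[OF iv bv' K0 t])
    have p1: "0 \<le> norm (U a) + K * (b - a)" using nU norm_ge_zero[of "U t"] by linarith
    have m1: "norm (u t) * norm (V t) \<le> K * (norm (V a) + K * (b - a))"
      using bu'[OF t] nV K0 by (intro mult_mono) auto
    have m2: "norm (U t) * norm (v t) \<le> (norm (U a) + K * (b - a)) * K"
      using bv'[OF t] nU p1 by (intro mult_mono) auto
    have "norm (u t * V t + U t * v t) \<le> norm (u t) * norm (V t) + norm (U t) * norm (v t)"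
      by (metis norm_mult norm_triangle_ineq)
    then show "norm (u t * V t + U t * v t) \<le> K * (norm (V a) + K * (b - a)) + (norm (U a) + K * (b - a)) * K"
      using m1 m2 by linarith
  qed
  ultimately show ?thesis by blast
qed

lemma bdd_cont:
  assumes "continuous_on {a..b} u"
  shows "bdd u a b"
proof -
  have "compact (u ` {a..b})" using assms by (intro compact_continuous_image) auto
  then show ?thesis unfolding bdd_def using compact_imp_bounded bounded_iff by (metis image_eqI)
qed

lemma ii_deriv:
  assumes "\<And>t. t \<in> {a..b} \<Longrightarrow> (V has_vector_derivative v t) (at t)"
  shows "ii v V a b"
  unfolding ii_def
proof (intro allI impI)
  fix s t assume st: "a \<le> s" "s \<le> t" "t \<le> b"
  show "(v has_integral V t - V s) {s..t}"
    by (rule fundamental_theorem_of_calculus[OF st(2)])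
       (use assms st in \<open>auto intro: has_vector_derivative_at_within\<close>)
qed

definition Ef :: "real \<Rightarrow> real \<Rightarrow> complex" where
  "Ef \<eta> l = exp (\<i> * complex_of_real (3 * \<eta> * l\<^sup>2 / 4))"

lemma Ef_deriv: "((Ef \<eta>) has_vector_derivative (\<i> * of_real (3 * \<eta> * l / 2) * Ef \<eta> l)) (at l)"
proof -
  have d: "((\<lambda>z. exp (\<i> * of_real (3 * \<eta> / 4) * z\<^sup>2)) has_field_derivative
      exp (\<i> * of_real (3 * \<eta> / 4) * (of_real l)\<^sup>2) * (\<i> * of_real (3 * \<eta> / 4) * (2 * of_real l))) (at (of_real l))"
    by (auto intro!: derivative_eq_intros)
  have e1: "(\<lambda>x. exp (\<i> * of_real (3 * \<eta> / 4) * (of_real x)\<^sup>2)) = Ef \<eta>"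
    by (rule ext) (simp add: Ef_def field_simps)
  have e2: "exp (\<i> * of_real (3 * \<eta> / 4) * (of_real l)\<^sup>2) * (\<i> * of_real (3 * \<eta> / 4) * (2 * of_real l))
      = \<i> * of_real (3 * \<eta> * l / 2) * Ef \<eta> l"
    by (simp add: Ef_def field_simps)
  show ?thesis using has_vector_derivative_real_field[OF d, where s=UNIV] unfolding e1 e2 by simp
qed

lemma Rq_deriv:
  assumes "\<eta> \<noteq> 0" "l \<noteq> 0"
  shows "((\<lambda>l. 1 / (\<i> * of_real (3 * \<eta> * l / 2))) has_vector_derivative (- (1 / (\<i> * of_real (3 * \<eta> * l\<^sup>2 / 2))))) (at l)"
proof -
  have d: "((\<lambda>z. 1 / (\<i> * of_real (3 * \<eta> / 2) * z)) has_field_derivative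
      - (\<i> * of_real (3 * \<eta> / 2)) / (\<i> * of_real (3 * \<eta> / 2) * of_real l)\<^sup>2) (at (of_real l))"
    using assms by (auto intro!: derivative_eq_intros simp: power2_eq_square field_simps)
  have e1: "(\<lambda>x. 1 / (\<i> * of_real (3 * \<eta> / 2) * of_real x)) = (\<lambda>l. 1 / (\<i> * of_real (3 * \<eta> * l / 2)))"
    by (rule ext) (simp add: field_simps)
  have e2: "- (\<i> * of_real (3 * \<eta> / 2)) / (\<i> * of_real (3 * \<eta> / 2) * of_real l)\<^sup>2
      = - (1 / (\<i> * of_real (3 * \<eta> * l\<^sup>2 / 2)))"
    using assms by (simp add: field_simps power2_eq_square)
  show ?thesis using has_vector_derivative_real_field[OF d, where s=UNIV] unfolding e1 e2 by simp
qed

lemma inv_sq_integral: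
  fixes x y :: real
  assumes "0 < x" "x \<le> y"
  shows "((\<lambda>l. 1 / l\<^sup>2) has_integral (1 / x - 1 / y)) {x..y}"
proof -
  have "((\<lambda>l. 1 / l\<^sup>2) has_integral ((- 1 / y) - (- 1 / x))) {x..y}"
  proof (rule fundamental_theorem_of_calculus[OF assms(2)])
    fix l assume l: "l \<in> {x..y}"
    then have "l \<noteq> 0" using assms by auto
    then have "((\<lambda>l. - 1 / l) has_real_derivative 1 / l\<^sup>2) (at l)"
      by (auto intro!: derivative_eq_intros simp: power2_eq_square)
    then show "((\<lambda>l. - 1 / l) has_vector_derivative 1 / l\<^sup>2) (at l within {x..y})"
      by (simp add: has_real_derivative_iff_has_vector_derivative has_vector_derivative_at_within)
  qed
  then show ?thesis by simp
qed



lemma core: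
  assumes Wf: "W01_bound f hf A B" and Wg: "W01_bound g hg A' B'" and eta: "\<eta> \<noteq> 0"
    and x: "0 < x" "x \<le> y" and nb: "\<And>l. l \<in> {x..y} \<Longrightarrow> \<eta> + l \<noteq> 0 \<and> \<eta> - l \<noteq> 0"
    and Qi: "Q integrable_on {x..y}"
    and Qb: "\<And>l. l \<in> {x..y} \<Longrightarrow> (norm (hf ((\<eta> + l) / 2)) * A' + A * norm (hg ((\<eta> - l) / 2))) / (2 * l) \<le> Q l"
  shows "norm (integral {x..y} (Phi f g \<eta>)) \<le> 2 * A * A' / (\<bar>\<eta>\<bar> * x) + 2 / (3 * \<bar>\<eta>\<bar>) * integral {x..y} Q"
proof -
  note Wf0 = W_basic[OF Wf] and Wg0 = W_basic[OF Wg]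
  define Fu where "Fu = (\<lambda>l. hf ((\<eta> + l) / 2) / 2)"
  define FU where "FU = (\<lambda>l. f ((\<eta> + l) / 2))"
  define Gv where "Gv = (\<lambda>l. - (hg ((\<eta> - l) / 2) / 2))"
  define GV where "GV = (\<lambda>l. g ((\<eta> - l) / 2))"
  have i1: "ii Fu FU x y" unfolding Fu_def FU_def by (rule comp_plus[OF Wf]) (use nb in blast)
  have i2: "ii Gv GV x y" unfolding Gv_def GV_def by (rule comp_minus[OF Wg]) (use nb in blast)
  have b1: "bdd Fu x y" unfolding bdd_def Fu_def
  proof (intro exI ballI)
    fix l assume "l \<in> {x..y}"
    then have "(\<eta> + l) / 2 \<noteq> 0" using nb by auto
    then show "norm (hf ((\<eta> + l) / 2) / 2) \<le> B" using Wf0(4)[of "(\<eta> + l) / 2"] Wf0(2) by (simp add: norm_divide)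
  qed
  have b2: "bdd Gv x y" unfolding bdd_def Gv_def
  proof (intro exI ballI)
    fix l assume "l \<in> {x..y}"
    then have "(\<eta> - l) / 2 \<noteq> 0" using nb by auto
    then show "norm (- (hg ((\<eta> - l) / 2) / 2)) \<le> B'" using Wg0(4)[of "(\<eta> - l) / 2"] Wg0(2) by (simp add: norm_divide)
  qed
  define F' where "F' = (\<lambda>l. Fu l * GV l + FU l * Gv l)"
  define F where "F = (\<lambda>l. FU l * GV l)"
  have iF: "ii F' F x y" and bF: "bdd F' x y" using ii_prod2[OF i1 b1 i2 b2] unfolding F'_def F_def by auto
  define Rq where "Rq = (\<lambda>l. 1 / (\<i> * complex_of_real (3 * \<eta> * l / 2)))"
  define Rq' where "Rq' = (\<lambda>l. - (1 / (\<i> * complex_of_real (3 * \<eta> * l\<^sup>2 / 2))))"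
  have iR: "ii Rq' Rq x y" unfolding Rq_def Rq'_def
    by (rule ii_deriv, rule Rq_deriv[OF eta]) (use x in auto)
  have bR: "bdd Rq' x y" unfolding Rq'_def
    by (rule bdd_cont) (use x eta in \<open>auto intro!: continuous_intros\<close>)
  define U' where "U' = (\<lambda>l. F' l * Rq l + F l * Rq' l)"
  define U where "U = (\<lambda>l. F l * Rq l)"
  have iU: "ii U' U x y" and bU: "bdd U' x y" using ii_prod2[OF iF bF iR bR] unfolding U'_def U_def by auto
  define E' where "E' = (\<lambda>l. \<i> * of_real (3 * \<eta> * l / 2) * Ef \<eta> l)"
  have iE: "ii E' (Ef \<eta>) x y" unfolding E'_def by (rule ii_deriv, rule Ef_deriv)
  have bE: "bdd E' x y" unfolding E'_def Ef_def
    by (rule bdd_cont) (auto intro!: continuous_intros)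
  define W' where "W' = (\<lambda>l. E' l * U l + Ef \<eta> l * U' l)"
  define W where "W = (\<lambda>l. Ef \<eta> l * U l)"
  have iW: "ii W' W x y" using ii_prod2[OF iE bE iU bU] unfolding W'_def W_def by auto
  then have hW: "(W' has_integral (W y - W x)) {x..y}" unfolding ii_def using x by auto
  have Phi_eq: "E' l * U l = Phi f g \<eta> l" if "l \<in> {x..y}" for l
  proof -
    have "l \<noteq> 0" using that x by auto
    then have nz: "\<i> * complex_of_real (3 * \<eta> * l / 2) \<noteq> 0" using eta by simp
    show ?thesis unfolding E'_def U_def Rq_def F_def FU_def GV_def Phi_def Ef_def
      using nz by (simp add: field_simps)
  qed
  have PhiI: "Phi f g \<eta> integrable_on {x..y}" by (rule Phi_int[OF Wf Wg])
  have hI2: "((\<lambda>l. Ef \<eta> l * U' l) has_integral (W y - W x - integral {x..y} (Phi f g \<eta>))) {x..y}"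
  proof (rule has_integral_eq[OF _ has_integral_diff[OF hW integrable_integral[OF PhiI]]])
    fix l assume "l \<in> {x..y}"
    then show "W' l - Phi f g \<eta> l = Ef \<eta> l * U' l" unfolding W'_def using Phi_eq by simp
  qed
  define I2 where "I2 = W y - W x - integral {x..y} (Phi f g \<eta>)"
  have Ieq: "integral {x..y} (Phi f g \<eta>) = W y - W x - I2" unfolding I2_def by simp
  have nEf: "norm (Ef \<eta> l) = 1" for l unfolding Ef_def by simp
  have nRq: "norm (Rq l) = 2 / (3 * \<bar>\<eta>\<bar> * l)" if "l > 0" for l
    unfolding Rq_def using that by (simp add: norm_divide norm_mult abs_mult)
  have nRq': "norm (Rq' l) = 2 / (3 * \<bar>\<eta>\<bar> * l\<^sup>2)" for l
    unfolding Rq'_def by (simp add: norm_divide norm_mult abs_mult norm_power)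
  have nF: "norm (F l) \<le> A * A'" if "l \<in> {x..y}" for l
  proof -
    have "(\<eta> + l) / 2 \<noteq> 0" "(\<eta> - l) / 2 \<noteq> 0" using nb[OF that] by auto
    then show ?thesis unfolding F_def FU_def GV_def
      using Wf0 Wg0 by (simp add: norm_mult mult_mono)
  qed
  have nF': "norm (F' l) \<le> (norm (hf ((\<eta> + l) / 2)) * A' + A * norm (hg ((\<eta> - l) / 2))) / 2" if "l \<in> {x..y}" for l
  proof -
    have ne: "(\<eta> + l) / 2 \<noteq> 0" "(\<eta> - l) / 2 \<noteq> 0" using nb[OF that] by auto
    have "norm (F' l) \<le> norm (Fu l) * norm (GV l) + norm (FU l) * norm (Gv l)"
      unfolding F'_def by (metis norm_mult norm_triangle_ineq)
    also have "\<dots> \<le> (norm (hf ((\<eta> + l) / 2)) / 2) * A' + A * (norm (hg ((\<eta> - l) / 2)) / 2)"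
      unfolding Fu_def GV_def FU_def Gv_def using ne Wf0 Wg0
      by (intro add_mono mult_mono) (auto simp: norm_divide)
    finally show ?thesis by (simp add: field_simps)
  qed
  define c where "c = 2 / (3 * \<bar>\<eta>\<bar>)"
  have c0: "c > 0" unfolding c_def using eta by simp
  have nW: "norm (W l) \<le> c * (A * A') / x" if "l \<in> {x..y}" for l
  proof -
    have l0: "l > 0" using that x by auto
    have "norm (W l) = norm (F l) * (2 / (3 * \<bar>\<eta>\<bar> * l))" unfolding W_def U_def
      using nEf nRq[OF l0] by (simp add: norm_mult)
    also have "\<dots> \<le> (A * A') * (2 / (3 * \<bar>\<eta>\<bar> * x))"
      using nF[OF that] l0 that x eta Wf0 Wg0
      by (intro mult_mono frac_le) (auto intro: mult_pos_pos)
    finally show ?thesis unfolding c_def by (simp add: field_simps)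
  qed
  have nI: "norm (Ef \<eta> l * U' l) \<le> c * (Q l + (A * A') * (1 / l\<^sup>2))" if "l \<in> {x..y}" for l
  proof -
    have l0: "l > 0" using that x by auto
    have "norm (Ef \<eta> l * U' l) = norm (U' l)" by (simp add: norm_mult nEf)
    also have "\<dots> \<le> norm (F' l) * norm (Rq l) + norm (F l) * norm (Rq' l)"
      unfolding U'_def by (metis norm_mult norm_triangle_ineq)
    also have "\<dots> \<le> ((norm (hf ((\<eta> + l) / 2)) * A' + A * norm (hg ((\<eta> - l) / 2))) / 2) * (2 / (3 * \<bar>\<eta>\<bar> * l))
                   + (A * A') * (2 / (3 * \<bar>\<eta>\<bar> * l\<^sup>2))"
      unfolding nRq[OF l0] nRq' using nF[OF that] nF'[OF that] l0
      by (intro add_mono mult_right_mono) auto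
    also have "\<dots> = c * ((norm (hf ((\<eta> + l) / 2)) * A' + A * norm (hg ((\<eta> - l) / 2))) / (2 * l) + (A * A') * (1 / l\<^sup>2))"
      unfolding c_def using l0 eta by (simp add: field_simps)
    also have "\<dots> \<le> c * (Q l + (A * A') * (1 / l\<^sup>2))"
      using Qb[OF that] c0 by (intro mult_left_mono add_right_mono) auto
    finally show ?thesis .
  qed
  have hsq: "((\<lambda>l. 1 / l\<^sup>2) has_integral (1 / x - 1 / y)) {x..y}" by (rule inv_sq_integral[OF x])
  have hmaj: "((\<lambda>l. c * (Q l + (A * A') * (1 / l\<^sup>2))) has_integral c * (integral {x..y} Q + (A * A') * (1 / x - 1 / y))) {x..y}"
    by (intro has_integral_mult_right has_integral_add integrable_integral Qi hsq)
  have "norm I2 \<le> c * (integral {x..y} Q + (A * A') * (1 / x - 1 / y))"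
  proof -
    have "norm (integral {x..y} (\<lambda>l. Ef \<eta> l * U' l)) \<le> integral {x..y} (\<lambda>l. c * (Q l + (A * A') * (1 / l\<^sup>2)))"
      by (rule integral_norm_bound_integral) (use hI2 hmaj nI in auto)
    then show ?thesis unfolding integral_unique[OF hI2] integral_unique[OF hmaj] I2_def .
  qed
  also have "\<dots> \<le> c * (integral {x..y} Q + (A * A') / x)"
  proof -
    have "(A * A') * (1 / x - 1 / y) \<le> (A * A') / x"
      using x Wf0 Wg0 by (simp add: field_simps)
    then show ?thesis using c0 by (intro mult_left_mono) auto
  qed
  finally have nI2: "norm I2 \<le> c * (integral {x..y} Q + (A * A') / x)" .
  have "norm (integral {x..y} (Phi f g \<eta>)) \<le> norm (W y) + norm (W x) + norm I2"
    unfolding Ieq by (smt (verit) norm_triangle_ineq4 norm_minus_commute)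
  also have "\<dots> \<le> c * (A * A') / x + c * (A * A') / x + c * (integral {x..y} Q + (A * A') / x)"
    using nW[of y] nW[of x] nI2 x by (intro add_mono) auto
  also have "\<dots> = 2 * A * A' / (\<bar>\<eta>\<bar> * x) + 2 / (3 * \<bar>\<eta>\<bar>) * integral {x..y} Q"
    unfolding c_def using eta x by (simp add: field_simps)
  finally show ?thesis .
qed



lemma piece_small:
  assumes Wf: "W01_bound f hf A B" and Wg: "W01_bound g hg A' B'" and "a \<le> b"
  shows "norm (integral {a..b} (Phi f g \<eta>)) \<le> A * A' * (b - a)"
proof -
  have "norm (integral {a..b} (Phi f g \<eta>)) \<le> (A * A') * Henstock_Kurzweil_Integration.content {a..b}"
  proof (rule has_integral_bound_real[where S="{-\<eta>, \<eta>}"])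
    show "0 \<le> A * A'" using W_basic(1)[OF Wf] W_basic(1)[OF Wg] by simp
    show "(Phi f g \<eta> has_integral integral {a..b} (Phi f g \<eta>)) {a..b}"
      by (rule integrable_integral[OF Phi_int[OF Wf Wg]])
    fix l assume "l \<in> {a..b} - {-\<eta>, \<eta>}"
    then have "\<eta> + l \<noteq> 0" "\<eta> - l \<noteq> 0" by auto
    then show "norm (Phi f g \<eta> l) \<le> A * A'" by (rule Phi_bound[OF Wf Wg])
  qed simp
  then show ?thesis using assms(3) by simp
qed

lemma tail:
  assumes Wf: "W01_bound f hf A B" and Wg: "W01_bound g hg A' B'" and eta: "\<eta> \<noteq> 0"
    and x: "0 < x" "x \<le> y"
    and Qi: "Q integrable_on {x..y}" and Q0: "\<And>l. l \<in> {x..y} \<Longrightarrow> 0 \<le> Q l"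
    and Qb: "\<And>l. l \<in> {x..y} \<Longrightarrow> l \<noteq> \<bar>\<eta>\<bar> \<Longrightarrow>
              (norm (hf ((\<eta> + l) / 2)) * A' + A * norm (hg ((\<eta> - l) / 2))) / (2 * l) \<le> Q l"
  shows "norm (integral {x..y} (Phi f g \<eta>)) \<le> 4 * A * A' / (\<bar>\<eta>\<bar> * x) + 2 / (3 * \<bar>\<eta>\<bar>) * integral {x..y} Q"
proof -
  define e where "e = \<bar>\<eta>\<bar>"
  have e0: "e > 0" using eta unfolding e_def by simp
  define M where "M = A * A'"
  have M0: "M \<ge> 0" unfolding M_def using W_basic(1)[OF Wf] W_basic(1)[OF Wg] by simp
  have nbl: "\<eta> + l \<noteq> 0 \<and> \<eta> - l \<noteq> 0" if "l > 0" "l \<noteq> e" for l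
    using that unfolding e_def by auto
  have coreI: "norm (integral {s..t} (Phi f g \<eta>)) \<le> 2 * M / (e * s) + 2 / (3 * e) * integral {s..t} Q"
    if st: "x \<le> s" "s \<le> t" "t \<le> y" and ne: "e \<notin> {s..t}" for s t
  proof -
    have "norm (integral {s..t} (Phi f g \<eta>)) \<le> 2 * A * A' / (\<bar>\<eta>\<bar> * s) + 2 / (3 * \<bar>\<eta>\<bar>) * integral {s..t} Q"
    proof (rule core[OF Wf Wg eta])
      show "0 < s" "s \<le> t" using st x by auto
      fix l assume l: "l \<in> {s..t}"
      then have "l > 0" "l \<noteq> e" using ne st x by auto
      then show "\<eta> + l \<noteq> 0 \<and> \<eta> - l \<noteq> 0" by (rule nbl)
    next
      show "Q integrable_on {s..t}" by (rule integrable_subinterval_real[OF Qi]) (use st in auto)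
      show "\<And>l. l \<in> {s..t} \<Longrightarrow> (norm (hf ((\<eta> + l) / 2)) * A' + A * norm (hg ((\<eta> - l) / 2))) / (2 * l) \<le> Q l"
        using Qb ne st by (metis atLeastAtMost_iff order_trans e_def)
    qed
    then show ?thesis unfolding M_def e_def by (simp add: mult.assoc)
  qed
  have Qint: "integral {s..t} Q \<le> integral {x..y} Q" if st: "x \<le> s" "s \<le> t" "t \<le> y" for s t
  proof -
    have i1: "integral {x..s} Q + integral {s..y} Q = integral {x..y} Q"
      using st Qi by (intro Henstock_Kurzweil_Integration.integral_combine) auto
    have "integral {s..t} Q + integral {t..y} Q = integral {s..y} Q"
      using st by (intro Henstock_Kurzweil_Integration.integral_combine integrable_subinterval_real[OF Qi]) auto
    moreover have "integral {x..s} Q \<ge> 0" "integral {t..y} Q \<ge> 0"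
      using st Q0 by (auto intro!: integral_nonneg integrable_subinterval_real[OF Qi])
    ultimately show ?thesis using i1 by linarith
  qed
  have PI: "Phi f g \<eta> integrable_on {a..b}" for a b by (rule Phi_int[OF Wf Wg])
  show ?thesis
  proof (cases "e \<in> {x..y}")
    case False
    have "norm (integral {x..y} (Phi f g \<eta>)) \<le> 2 * M / (e * x) + 2 / (3 * e) * integral {x..y} Q"
      by (rule coreI) (use x False in auto)
    also have "\<dots> \<le> 4 * M / (e * x) + 2 / (3 * e) * integral {x..y} Q"
      using M0 e0 x by (simp add: divide_right_mono)
    finally show ?thesis unfolding M_def e_def by (simp add: mult.assoc)
  next
    case True
    have key: "norm (integral {x..y} (Phi f g \<eta>)) \<le> 4 * M / (e * x) + 2 / (3 * e) * integral {x..y} Q + d"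
      if d: "d > 0" for d
    proof -
      define \<epsilon> where "\<epsilon> = d / (2 * (M + 1))"
      have \<epsilon>0: "\<epsilon> > 0" unfolding \<epsilon>_def using d M0 by simp
      have \<epsilon>M: "2 * \<epsilon> * M \<le> d" unfolding \<epsilon>_def using d M0 by (simp add: field_simps)
      define a1 where "a1 = max x (e - \<epsilon>)"
      define a2 where "a2 = min y (e + \<epsilon>)"
      have o: "x \<le> a1" "a1 \<le> a2" "a2 \<le> y" "a2 - a1 \<le> 2 * \<epsilon>"
        using True \<epsilon>0 unfolding a1_def a2_def by auto
      have split: "integral {x..y} (Phi f g \<eta>) = integral {x..a1} (Phi f g \<eta>) + integral {a1..a2} (Phi f g \<eta>) + integral {a2..y} (Phi f g \<eta>)"
      proof -
        have A: "integral {x..a1} (Phi f g \<eta>) + integral {a1..y} (Phi f g \<eta>) = integral {x..y} (Phi f g \<eta>)"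
          using o by (intro Henstock_Kurzweil_Integration.integral_combine PI) auto
        have B: "integral {a1..a2} (Phi f g \<eta>) + integral {a2..y} (Phi f g \<eta>) = integral {a1..y} (Phi f g \<eta>)"
          using o by (intro Henstock_Kurzweil_Integration.integral_combine PI) auto
        show ?thesis by (simp only: add.assoc B A)
      qed
      have Qsplit: "integral {x..a1} Q + integral {a2..y} Q \<le> integral {x..y} Q"
      proof -
        have "integral {x..a1} Q + integral {a1..y} Q = integral {x..y} Q"
          using o Qi by (intro Henstock_Kurzweil_Integration.integral_combine) auto
        moreover have "integral {a1..a2} Q + integral {a2..y} Q = integral {a1..y} Q"
          using o by (intro Henstock_Kurzweil_Integration.integral_combine integrable_subinterval_real[OF Qi]) auto
        moreover have "integral {a1..a2} Q \<ge> 0"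
          using o Q0 by (auto intro!: integral_nonneg integrable_subinterval_real[OF Qi])
        ultimately show ?thesis by linarith
      qed
      have p1: "norm (integral {x..a1} (Phi f g \<eta>)) \<le> 2 * M / (e * x) + 2 / (3 * e) * integral {x..a1} Q"
      proof (cases "a1 = x")
        case True
        have "integral {x..a1} Q = 0" using True by simp
        then show ?thesis using True M0 e0 x by simp
      next
        case False
        then have "a1 = e - \<epsilon>" "x < a1" using o unfolding a1_def by auto
        then show ?thesis using o \<epsilon>0 by (intro coreI) auto
      qed
      have p3: "norm (integral {a2..y} (Phi f g \<eta>)) \<le> 2 * M / (e * x) + 2 / (3 * e) * integral {a2..y} Q"
      proof (cases "a2 = y")
        case True
        have "integral {a2..y} Q = 0" using True by simp
        then show ?thesis using True M0 e0 x by simp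
      next
        case False
        then have a2e: "a2 = e + \<epsilon>" "a2 < y" using o unfolding a2_def by auto
        have "norm (integral {a2..y} (Phi f g \<eta>)) \<le> 2 * M / (e * a2) + 2 / (3 * e) * integral {a2..y} Q"
          using o a2e \<epsilon>0 by (intro coreI) auto
        also have "2 * M / (e * a2) \<le> 2 * M / (e * x)"
          using M0 e0 x o by (intro divide_left_mono mult_left_mono) auto
        finally show ?thesis by simp
      qed
      have p2: "norm (integral {a1..a2} (Phi f g \<eta>)) \<le> d"
      proof -
        have "norm (integral {a1..a2} (Phi f g \<eta>)) \<le> M * (a2 - a1)"
          unfolding M_def by (rule piece_small[OF Wf Wg]) (use o in auto)
        also have "\<dots> \<le> M * (2 * \<epsilon>)" using o M0 by (intro mult_left_mono) auto
        finally show ?thesis using \<epsilon>M by (simp add: mult_ac)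
      qed
      have "norm (integral {x..y} (Phi f g \<eta>)) \<le> norm (integral {x..a1} (Phi f g \<eta>)) + norm (integral {a1..a2} (Phi f g \<eta>)) + norm (integral {a2..y} (Phi f g \<eta>))"
        unfolding split by (rule order_trans[OF norm_triangle_ineq add_right_mono[OF norm_triangle_ineq]])
      also have "\<dots> \<le> (2 * M / (e * x) + 2 / (3 * e) * integral {x..a1} Q) + d + (2 * M / (e * x) + 2 / (3 * e) * integral {a2..y} Q)"
        using p1 p2 p3 by linarith
      also have "\<dots> = 4 * M / (e * x) + 2 / (3 * e) * (integral {x..a1} Q + integral {a2..y} Q) + d"
        by (simp add: distrib_left)
      also have "\<dots> \<le> 4 * M / (e * x) + 2 / (3 * e) * integral {x..y} Q + d"
      proof -
        have cq: "2 / (3 * e) * (integral {x..a1} Q + integral {a2..y} Q) \<le> 2 / (3 * e) * integral {x..y} Q"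
          by (rule mult_left_mono[OF Qsplit]) (use e0 in simp)
        then show ?thesis by linarith
      qed
      finally show ?thesis .
    qed
    have "norm (integral {x..y} (Phi f g \<eta>)) \<le> 4 * M / (e * x) + 2 / (3 * e) * integral {x..y} Q"
      by (rule field_le_epsilon) (rule key)
    then show ?thesis unfolding M_def e_def by (simp add: mult.assoc)
  qed
qed



lemma tail_Q1:
  assumes Wf: "W01_bound f hf A B" and Wg: "W01_bound g hg A' B'" and eta: "\<eta> \<noteq> 0"
    and x: "0 < x" "x \<le> y"
  shows "norm (integral {x..y} (Phi f g \<eta>)) \<le> 4 * A * A' / (\<bar>\<eta>\<bar> * x) + (B * A' + A * B') / (3 * \<bar>\<eta>\<bar>) * (ln y - ln x)"
proof -
  define S where "S = B * A' + A * B'"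
  have S0: "S \<ge> 0" unfolding S_def using W_basic(1,2)[OF Wf] W_basic(1,2)[OF Wg] by simp
  have hQ: "((\<lambda>l. S / (2 * l)) has_integral (S / 2 * ln y - S / 2 * ln x)) {x..y}"
  proof (rule fundamental_theorem_of_calculus[OF x(2)])
    fix l assume l: "l \<in> {x..y}"
    then have "l > 0" using x by auto
    then have "((\<lambda>l. S / 2 * ln l) has_real_derivative S / (2 * l)) (at l)"
      by (auto intro!: derivative_eq_intros simp: field_simps)
    then show "((\<lambda>l. S / 2 * ln l) has_vector_derivative S / (2 * l)) (at l within {x..y})"
      by (simp add: has_real_derivative_iff_has_vector_derivative has_vector_derivative_at_within)
  qed
  have "norm (integral {x..y} (Phi f g \<eta>)) \<le> 4 * A * A' / (\<bar>\<eta>\<bar> * x) + 2 / (3 * \<bar>\<eta>\<bar>) * integral {x..y} (\<lambda>l. S / (2 * l))"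
  proof (rule tail[OF Wf Wg eta x])
    show "(\<lambda>l. S / (2 * l)) integrable_on {x..y}" using hQ by blast
    show "\<And>l. l \<in> {x..y} \<Longrightarrow> 0 \<le> S / (2 * l)" using S0 x by auto
    fix l assume l: "l \<in> {x..y}" "l \<noteq> \<bar>\<eta>\<bar>"
    then have l0: "l > 0" using x by auto
    then have ne: "(\<eta> + l) / 2 \<noteq> 0" "(\<eta> - l) / 2 \<noteq> 0" using l by auto
    have "norm (hf ((\<eta> + l) / 2)) * A' + A * norm (hg ((\<eta> - l) / 2)) \<le> B * A' + A * B'"
      using W_basic[OF Wf] W_basic[OF Wg] ne by (intro add_mono mult_mono) auto
    then show "(norm (hf ((\<eta> + l) / 2)) * A' + A * norm (hg ((\<eta> - l) / 2))) / (2 * l) \<le> S / (2 * l)"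
      unfolding S_def using l0 by (intro divide_right_mono) auto
  qed
  also have "integral {x..y} (\<lambda>l. S / (2 * l)) = S / 2 * ln y - S / 2 * ln x" by (rule integral_unique[OF hQ])
  also have "2 / (3 * \<bar>\<eta>\<bar>) * (S / 2 * ln y - S / 2 * ln x) = S / (3 * \<bar>\<eta>\<bar>) * (ln y - ln x)"
    using eta by (simp add: field_simps)
  finally show ?thesis unfolding S_def .
qed

lemma tail_Q2:
  assumes Wf: "W01_bound f hf A B" and Wg: "W01_bound g hg A' B'" and eta: "\<eta> \<noteq> 0"
    and x: "2 * \<bar>\<eta>\<bar> \<le> x" "x \<le> y"
  shows "norm (integral {x..y} (Phi f g \<eta>)) \<le> 4 * A * A' / (\<bar>\<eta>\<bar> * x) + 4 * (B * A' + A * B') / (3 * \<bar>\<eta>\<bar> * x)"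
proof -
  define S where "S = B * A' + A * B'"
  have S0: "S \<ge> 0" unfolding S_def using W_basic(1,2)[OF Wf] W_basic(1,2)[OF Wg] by simp
  have x0: "0 < x" using x eta by (smt (verit) zero_less_abs_iff)
  have hQ: "((\<lambda>l. 2 * S * (1 / l\<^sup>2)) has_integral (2 * S * (1 / x - 1 / y))) {x..y}"
    by (intro has_integral_mult_right inv_sq_integral x0 x(2))
  have "norm (integral {x..y} (Phi f g \<eta>)) \<le> 4 * A * A' / (\<bar>\<eta>\<bar> * x) + 2 / (3 * \<bar>\<eta>\<bar>) * integral {x..y} (\<lambda>l. 2 * S * (1 / l\<^sup>2))"
  proof (rule tail[OF Wf Wg eta x0 x(2)])
    show "(\<lambda>l. 2 * S * (1 / l\<^sup>2)) integrable_on {x..y}" using hQ by blast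
    show "\<And>l. l \<in> {x..y} \<Longrightarrow> 0 \<le> 2 * S * (1 / l\<^sup>2)" using S0 x by auto
    fix l assume l: "l \<in> {x..y}" "l \<noteq> \<bar>\<eta>\<bar>"
    then have l0: "l > 0" using x0 by auto
    have l2: "2 * \<bar>\<eta>\<bar> \<le> l" using l x by auto
    have lb1: "\<bar>(\<eta> + l) / 2\<bar> \<ge> l / 4" using l2 by (cases "\<eta> \<ge> 0") auto
    have lb2: "\<bar>(\<eta> - l) / 2\<bar> \<ge> l / 4" using l2 by (cases "\<eta> \<ge> 0") auto
    have ne: "(\<eta> + l) / 2 \<noteq> 0" "(\<eta> - l) / 2 \<noteq> 0" using lb1 lb2 l0 by auto
    have h1: "norm (hf ((\<eta> + l) / 2)) \<le> 4 * B / l"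
    proof -
      have "\<bar>(\<eta> + l) / 2\<bar> * norm (hf ((\<eta> + l) / 2)) \<le> B" by (rule W_basic(5)[OF Wf ne(1)])
      then have "(l / 4) * norm (hf ((\<eta> + l) / 2)) \<le> B"
        using lb1 by (smt (verit) mult_right_mono norm_ge_zero)
      then show ?thesis using l0 by (simp add: field_simps)
    qed
    have h2: "norm (hg ((\<eta> - l) / 2)) \<le> 4 * B' / l"
    proof -
      have "\<bar>(\<eta> - l) / 2\<bar> * norm (hg ((\<eta> - l) / 2)) \<le> B'" by (rule W_basic(5)[OF Wg ne(2)])
      then have "(l / 4) * norm (hg ((\<eta> - l) / 2)) \<le> B'"
        using lb2 by (smt (verit) mult_right_mono norm_ge_zero)
      then show ?thesis using l0 by (simp add: field_simps)
    qed
    have "norm (hf ((\<eta> + l) / 2)) * A' + A * norm (hg ((\<eta> - l) / 2)) \<le> (4 * B / l) * A' + A * (4 * B' / l)"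
      using W_basic[OF Wf] W_basic[OF Wg] h1 h2 l0 by (intro add_mono mult_mono) auto
    also have "\<dots> = 4 * S / l" unfolding S_def by (simp add: field_simps add_divide_distrib)
    finally have "(norm (hf ((\<eta> + l) / 2)) * A' + A * norm (hg ((\<eta> - l) / 2))) / (2 * l) \<le> (4 * S / l) / (2 * l)"
      using l0 by (intro divide_right_mono) auto
    also have "\<dots> = 2 * S * (1 / l\<^sup>2)" using l0 by (simp add: field_simps power2_eq_square)
    finally show "(norm (hf ((\<eta> + l) / 2)) * A' + A * norm (hg ((\<eta> - l) / 2))) / (2 * l) \<le> 2 * S * (1 / l\<^sup>2)" .
  qed
  also have "integral {x..y} (\<lambda>l. 2 * S * (1 / l\<^sup>2)) = 2 * S * (1 / x - 1 / y)" by (rule integral_unique[OF hQ])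
  also have "4 * A * A' / (\<bar>\<eta>\<bar> * x) + 2 / (3 * \<bar>\<eta>\<bar>) * (2 * S * (1 / x - 1 / y)) \<le> 4 * A * A' / (\<bar>\<eta>\<bar> * x) + 4 * S / (3 * \<bar>\<eta>\<bar> * x)"
  proof -
    have "2 / (3 * \<bar>\<eta>\<bar>) * (2 * S * (1 / x - 1 / y)) \<le> 2 / (3 * \<bar>\<eta>\<bar>) * (2 * S * (1 / x))"
      using S0 x0 x eta by (intro mult_left_mono) (auto simp: field_simps)
    also have "2 / (3 * \<bar>\<eta>\<bar>) * (2 * S * (1 / x)) = 4 * S / (3 * \<bar>\<eta>\<bar> * x)"
      using eta x0 by (simp add: field_simps)
    finally show ?thesis by simp
  qed
  finally show ?thesis unfolding S_def .
qed



lemma ln_bound: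
  fixes s :: real
  assumes "s > 0"
  shows "ln 2 + 3 * ln s \<le> 3 * s"
proof -
  have "ln s \<le> s - 1" using ln_le_minus_one assms by simp
  moreover have "ln (2::real) \<le> 1" using ln_2_less_1 by simp
  ultimately show ?thesis by linarith
qed

lemma posbound_tail:
  assumes Wf: "W01_bound f hf A B" and Wg: "W01_bound g hg A' B'" and eta: "\<eta> \<noteq> 0"
    and R: "1 / sqrt \<bar>\<eta>\<bar> \<le> R"
  shows "norm (integral {1 / sqrt \<bar>\<eta>\<bar>..R} (Phi f g \<eta>)) \<le> (8 * (A * A') + 3 * (B * A' + A * B')) / sqrt \<bar>\<eta>\<bar>"
proof -
  define e where "e = \<bar>\<eta>\<bar>"
  define s where "s = sqrt e"
  define M where "M = A * A'"
  define S where "S = B * A' + A * B'"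
  have e0: "e > 0" unfolding e_def using eta by simp
  have s0: "s > 0" unfolding s_def using e0 by simp
  have es: "e = s\<^sup>2" unfolding s_def using e0 by simp
  define \<delta> where "\<delta> = 1 / s"
  have d0: "\<delta> > 0" unfolding \<delta>_def using s0 by simp
  have M0: "M \<ge> 0" unfolding M_def using W_basic(1)[OF Wf] W_basic(1)[OF Wg] by simp
  have S0: "S \<ge> 0" unfolding S_def using W_basic(1,2)[OF Wf] W_basic(1,2)[OF Wg] by simp
  have ed: "e * \<delta> = s" unfolding \<delta>_def es using s0 by (simp add: power2_eq_square)
  have R': "\<delta> \<le> R" using R unfolding \<delta>_def s_def e_def by simp
  note Q1 = tail_Q1[OF Wf Wg eta, folded e_def M_def S_def]
  note Q2 = tail_Q2[OF Wf Wg eta, folded e_def M_def S_def]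
  have Q1b: "norm (integral {\<delta>..y} (Phi f g \<eta>)) \<le> (4 * M + S) / s" if y: "\<delta> \<le> y" "y \<le> 2 * e" for y
  proof -
    have "norm (integral {\<delta>..y} (Phi f g \<eta>)) \<le> 4 * A * A' / (e * \<delta>) + S / (3 * e) * (ln y - ln \<delta>)"
      by (rule Q1) (use d0 y in auto)
    also have "4 * A * A' / (e * \<delta>) = 4 * M / s" unfolding ed M_def by simp
    also have "S / (3 * e) * (ln y - ln \<delta>) \<le> S / (3 * e) * (3 * s)"
    proof (rule mult_left_mono)
      have "ln y \<le> ln (2 * e)" using y d0 by simp
      also have "ln (2 * e) = ln 2 + 2 * ln s" unfolding es using s0 by (simp add: ln_mult ln_realpow)
      finally have "ln y - ln \<delta> \<le> ln 2 + 3 * ln s" unfolding \<delta>_def using s0 by (simp add: ln_div)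
      then show "ln y - ln \<delta> \<le> 3 * s" using ln_bound[OF s0] by linarith
      show "0 \<le> S / (3 * e)" using S0 e0 by simp
    qed
    also have "S / (3 * e) * (3 * s) = S / s" unfolding es using s0 by (simp add: field_simps power2_eq_square)
    finally show ?thesis by (simp add: add_divide_distrib)
  qed
  have Q2b: "norm (integral {x..y} (Phi f g \<eta>)) \<le> (4 * M + 4 * S / 3) / (e * x)" if x: "2 * e \<le> x" "x \<le> y" for x y
  proof -
    have "norm (integral {x..y} (Phi f g \<eta>)) \<le> 4 * A * A' / (e * x) + 4 * S / (3 * e * x)"
      by (rule Q2) (use x in auto)
    then show ?thesis unfolding M_def by (simp add: add_divide_distrib mult.assoc)
  qed
  have "norm (integral {\<delta>..R} (Phi f g \<eta>)) \<le> (8 * M + 3 * S) / s"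
  proof (cases "2 * e \<le> \<delta>")
    case True
    have "norm (integral {\<delta>..R} (Phi f g \<eta>)) \<le> (4 * M + 4 * S / 3) / (e * \<delta>)" by (rule Q2b[OF True R'])
    also have "\<dots> = (4 * M + 4 * S / 3) / s" unfolding ed ..
    also have "\<dots> \<le> (8 * M + 3 * S) / s" using M0 S0 s0 by (intro divide_right_mono) auto
    finally show ?thesis .
  next
    case False
    show ?thesis
    proof (cases "R \<le> 2 * e")
      case True
      have "norm (integral {\<delta>..R} (Phi f g \<eta>)) \<le> (4 * M + S) / s" by (rule Q1b[OF R' True])
      also have "\<dots> \<le> (8 * M + 3 * S) / s" using M0 S0 s0 by (intro divide_right_mono) auto
      finally show ?thesis .
    next
      case R2: False
      have split: "integral {\<delta>..2 * e} (Phi f g \<eta>) + integral {2 * e..R} (Phi f g \<eta>) = integral {\<delta>..R} (Phi f g \<eta>)"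
        using False R2 by (intro Henstock_Kurzweil_Integration.integral_combine Phi_int[OF Wf Wg]) auto
      have n1: "norm (integral {\<delta>..2 * e} (Phi f g \<eta>)) \<le> (4 * M + S) / s"
        by (rule Q1b) (use False in auto)
      have n2: "norm (integral {2 * e..R} (Phi f g \<eta>)) \<le> (4 * M + 4 * S / 3) / (e * (2 * e))"
        by (rule Q2b) (use R2 in auto)
      have s3: "1 < 2 * s ^ 3" using False unfolding \<delta>_def es using s0
        by (simp add: field_simps power2_eq_square power3_eq_cube)
      have "1 / (e * (2 * e)) \<le> 1 / s"
        unfolding es using s0 s3 by (simp add: field_simps power2_eq_square power3_eq_cube)
      then have "(4 * M + 4 * S / 3) / (e * (2 * e)) \<le> (4 * M + 4 * S / 3) * (1 / s)"
        using M0 S0 by (metis (no_types, lifting) divide_nonneg_nonneg mult_left_mono times_divide_eq_right mult_1_right zero_le_numeral add_nonneg_nonneg mult_nonneg_nonneg)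
      with n2 have n2': "norm (integral {2 * e..R} (Phi f g \<eta>)) \<le> (4 * M + 4 * S / 3) / s" by simp
      have "norm (integral {\<delta>..R} (Phi f g \<eta>)) \<le> (4 * M + S) / s + (4 * M + 4 * S / 3) / s"
        unfolding split[symmetric] using n1 n2' norm_triangle_ineq by (smt (verit))
      also have "\<dots> \<le> (8 * M + 3 * S) / s" using S0 s0 by (simp add: field_simps)
      finally show ?thesis .
    qed
  qed
  then show ?thesis unfolding \<delta>_def s_def e_def M_def S_def .
qed

lemma posbound:
  assumes Wf: "W01_bound f hf A B" and Wg: "W01_bound g hg A' B'" and eta: "\<eta> \<noteq> 0"
    and R: "0 \<le> R"
  shows "norm (integral {0..R} (Phi f g \<eta>)) \<le> (9 * (A * A') + 3 * (B * A' + A * B')) / sqrt \<bar>\<eta>\<bar>"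
proof -
  define \<delta> where "\<delta> = 1 / sqrt \<bar>\<eta>\<bar>"
  have d0: "\<delta> > 0" unfolding \<delta>_def using eta by simp
  have M0: "A * A' \<ge> 0" using W_basic(1)[OF Wf] W_basic(1)[OF Wg] by simp
  have S0: "B * A' + A * B' \<ge> 0" using W_basic(1,2)[OF Wf] W_basic(1,2)[OF Wg] by simp
  have small: "norm (integral {0..r} (Phi f g \<eta>)) \<le> (A * A') / sqrt \<bar>\<eta>\<bar>" if "0 \<le> r" "r \<le> \<delta>" for r
  proof -
    have "norm (integral {0..r} (Phi f g \<eta>)) \<le> A * A' * (r - 0)" by (rule piece_small[OF Wf Wg]) (use that in auto)
    also have "\<dots> \<le> A * A' * \<delta>" using that M0 by (intro mult_left_mono) auto
    finally show ?thesis unfolding \<delta>_def by simp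
  qed
  show ?thesis
  proof (cases "R \<le> \<delta>")
    case True
    have "norm (integral {0..R} (Phi f g \<eta>)) \<le> (A * A') / sqrt \<bar>\<eta>\<bar>" by (rule small[OF R True])
    also have "\<dots> \<le> (9 * (A * A') + 3 * (B * A' + A * B')) / sqrt \<bar>\<eta>\<bar>"
      using M0 S0 by (intro divide_right_mono) auto
    finally show ?thesis .
  next
    case False
    have split: "integral {0..\<delta>} (Phi f g \<eta>) + integral {\<delta>..R} (Phi f g \<eta>) = integral {0..R} (Phi f g \<eta>)"
      using False d0 by (intro Henstock_Kurzweil_Integration.integral_combine Phi_int[OF Wf Wg]) auto
    have n1: "norm (integral {0..\<delta>} (Phi f g \<eta>)) \<le> (A * A') / sqrt \<bar>\<eta>\<bar>" by (rule small) (use d0 in auto)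
    have n2: "norm (integral {\<delta>..R} (Phi f g \<eta>)) \<le> (8 * (A * A') + 3 * (B * A' + A * B')) / sqrt \<bar>\<eta>\<bar>"
      unfolding \<delta>_def by (rule posbound_tail[OF Wf Wg eta]) (use False in \<open>auto simp: \<delta>_def\<close>)
    have "norm (integral {0..R} (Phi f g \<eta>)) \<le> (A * A') / sqrt \<bar>\<eta>\<bar> + (8 * (A * A') + 3 * (B * A' + A * B')) / sqrt \<bar>\<eta>\<bar>"
      unfolding split[symmetric] using n1 n2 norm_triangle_ineq by (smt (verit))
    also have "\<dots> = (9 * (A * A') + 3 * (B * A' + A * B')) / sqrt \<bar>\<eta>\<bar>" using eta by (simp add: field_simps)
    finally show ?thesis .
  qed
qed



lemma conv:
  assumes Wf: "W01_bound f hf A B" and Wg: "W01_bound g hg A' B'" and eta: "\<eta> \<noteq> 0"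
  shows "\<exists>L. ((\<lambda>R. integral {0..R} (Phi f g \<eta>)) \<longlongrightarrow> L) at_top"
proof -
  define P where "P = (\<lambda>R. integral {0..R} (Phi f g \<eta>))"
  define K where "K = (4 * (A * A') + 4 * (B * A' + A * B') / 3) / \<bar>\<eta>\<bar>"
  have K0: "K \<ge> 0" unfolding K_def using W_basic(1,2)[OF Wf] W_basic(1,2)[OF Wg] by simp
  have dist1: "dist (P x) (P y) \<le> K / x" if xy: "2 * \<bar>\<eta>\<bar> \<le> x" "x \<le> y" for x y
  proof -
    have x0: "0 \<le> x" using xy by (smt (verit) abs_ge_zero)
    have x0': "0 < x" using xy eta by (smt (verit) zero_less_abs_iff)
    have "integral {0..x} (Phi f g \<eta>) + integral {x..y} (Phi f g \<eta>) = integral {0..y} (Phi f g \<eta>)"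
      using xy x0 by (intro Henstock_Kurzweil_Integration.integral_combine Phi_int[OF Wf Wg]) auto
    then have "dist (P x) (P y) = norm (integral {x..y} (Phi f g \<eta>))"
      unfolding P_def dist_norm by (metis add_diff_cancel_left' norm_minus_commute)
    also have "\<dots> \<le> 4 * A * A' / (\<bar>\<eta>\<bar> * x) + 4 * (B * A' + A * B') / (3 * \<bar>\<eta>\<bar> * x)"
      by (rule tail_Q2[OF Wf Wg eta xy])
    also have "\<dots> = K / x" unfolding K_def using eta x0' by (simp add: field_simps)
    finally show ?thesis .
  qed
  have cf: "cauchy_filter (filtermap P at_top)"
    unfolding cauchy_filter_metric_filtermap
  proof (intro allI impI)
    fix \<epsilon> :: real assume \<epsilon>: "\<epsilon> > 0"
    define R0 where "R0 = max (2 * \<bar>\<eta>\<bar>) (K / \<epsilon> + 1)"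
    have R00: "R0 > 0" unfolding R0_def using eta by auto
    have small: "K / x < \<epsilon>" if "R0 \<le> x" for x
    proof -
      have "x > K / \<epsilon>" using that unfolding R0_def by auto
      then have "K < \<epsilon> * x" using \<epsilon> by (simp add: field_simps)
      moreover have "x > 0" using that R00 by auto
      ultimately show ?thesis by (simp add: field_simps)
    qed
    show "\<exists>Pr. eventually Pr at_top \<and> (\<forall>x y. Pr x \<and> Pr y \<longrightarrow> dist (P x) (P y) < \<epsilon>)"
    proof (intro exI conjI allI impI)
      show "eventually (\<lambda>x. R0 \<le> x) at_top" by (rule eventually_ge_at_top)
      fix x y assume "R0 \<le> x \<and> R0 \<le> y"
      then have xy: "R0 \<le> x" "R0 \<le> y" by auto
      have R0e: "2 * \<bar>\<eta>\<bar> \<le> R0" unfolding R0_def by simp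
      show "dist (P x) (P y) < \<epsilon>"
      proof (cases "x \<le> y")
        case True
        then show ?thesis using dist1[of x y] small[OF xy(1)] xy R0e by auto
      next
        case False
        then show ?thesis using dist1[of y x] small[OF xy(2)] xy R0e by (auto simp: dist_commute)
      qed
    qed
  qed
  obtain c where "filtermap P at_top \<le> nhds c"
    using cauchy_filter_complete_converges[OF cf complete_UNIV] by (auto simp: filtermap_bot_iff)
  then show ?thesis unfolding P_def filterlim_def by blast
qed

lemma Phi_reflect: "(\<lambda>x. Phi g f \<eta> (- x)) = Phi f g \<eta>"
  by (rule ext) (simp add: Phi_def mult_ac)

lemma Ktrunc_split:
  assumes Wf: "W01_bound f hf A B" and Wg: "W01_bound g hg A' B'" and R: "0 \<le> R"
  shows "Ktrunc f g \<eta> R = integral {0..R} (Phi g f \<eta>) + integral {0..R} (Phi f g \<eta>)"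
proof -
  have "Ktrunc f g \<eta> R = integral {-R..0} (Phi f g \<eta>) + integral {0..R} (Phi f g \<eta>)"
    unfolding Ktrunc_Phi using R
    by (intro Henstock_Kurzweil_Integration.integral_combine[symmetric] Phi_int[OF Wf Wg]) auto
  also have "integral {-R..0} (Phi f g \<eta>) = integral {0..R} (Phi g f \<eta>)"
    using Henstock_Kurzweil_Integration.integral_reflect_real[of R 0 "Phi g f \<eta>"] unfolding Phi_reflect by simp
  finally show ?thesis .
qed

theorem lemma3p1:
  shows "\<exists>C. \<forall>f g hf hg A B A' B' \<eta>.
     W01_bound f hf A B \<longrightarrow> W01_bound g hg A' B' \<longrightarrow> \<eta> \<noteq> 0 \<longrightarrow>
     (\<exists>L. (Ktrunc f g \<eta> \<longlongrightarrow> L) at_top \<and>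
          norm L \<le> C / sqrt \<bar>\<eta>\<bar> * (A + B) * (A' + B'))"
proof (intro exI[of _ "18::real"] allI impI)
  fix f g hf hg A B A' B' and \<eta> :: real
  assume Wf: "W01_bound f hf A B" and Wg: "W01_bound g hg A' B'" and eta: "\<eta> \<noteq> 0"
  obtain L1 where L1: "((\<lambda>R. integral {0..R} (Phi f g \<eta>)) \<longlongrightarrow> L1) at_top" using conv[OF Wf Wg eta] by blast
  obtain L2 where L2: "((\<lambda>R. integral {0..R} (Phi g f \<eta>)) \<longlongrightarrow> L2) at_top" using conv[OF Wg Wf eta] by blast
  have ev: "eventually (\<lambda>R. integral {0..R} (Phi g f \<eta>) + integral {0..R} (Phi f g \<eta>) = Ktrunc f g \<eta> R) at_top"
    using eventually_ge_at_top[of 0] by eventually_elim (simp add: Ktrunc_split[OF Wf Wg])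
  have lim: "(Ktrunc f g \<eta> \<longlongrightarrow> L2 + L1) at_top"
    using tendsto_add[OF L2 L1] tendsto_cong[OF ev] by simp
  define bnd where "bnd = (9 * (A * A') + 3 * (B * A' + A * B')) / sqrt \<bar>\<eta>\<bar>"
  have b1: "norm L1 \<le> bnd"
  proof (rule tendsto_upperbound[OF tendsto_norm[OF L1]])
    show "eventually (\<lambda>R. norm (integral {0..R} (Phi f g \<eta>)) \<le> bnd) at_top"
      using eventually_ge_at_top[of 0] by eventually_elim (unfold bnd_def, rule posbound[OF Wf Wg eta])
  qed simp
  have b2: "norm L2 \<le> bnd"
  proof (rule tendsto_upperbound[OF tendsto_norm[OF L2]])
    show "eventually (\<lambda>R. norm (integral {0..R} (Phi g f \<eta>)) \<le> bnd) at_top"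
      using eventually_ge_at_top[of 0]
    proof eventually_elim
      case (elim R)
      have "norm (integral {0..R} (Phi g f \<eta>)) \<le> (9 * (A' * A) + 3 * (B' * A + A' * B)) / sqrt \<bar>\<eta>\<bar>"
        by (rule posbound[OF Wg Wf eta elim])
      then show ?case unfolding bnd_def by (simp add: mult_ac add_ac)
    qed
  qed simp
  have A0: "0 \<le> A" "0 \<le> B" using W_basic(1,2)[OF Wf] by auto
  have A0': "0 \<le> A'" "0 \<le> B'" using W_basic(1,2)[OF Wg] by auto
  have s0: "sqrt \<bar>\<eta>\<bar> > 0" using eta by simp
  have key: "2 * (9 * (A * A') + 3 * (B * A' + A * B')) \<le> 18 * ((A + B) * (A' + B'))"
  proof -
    have "0 \<le> 12 * (A * B') + 12 * (B * A') + 18 * (B * B')" using A0 A0' by simp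
    then show ?thesis by (simp add: algebra_simps)
  qed
  have "norm (L2 + L1) \<le> 2 * bnd" using b1 b2 norm_triangle_ineq[of L2 L1] by linarith
  also have "\<dots> = 2 * (9 * (A * A') + 3 * (B * A' + A * B')) / sqrt \<bar>\<eta>\<bar>" unfolding bnd_def by simp
  also have "\<dots> \<le> 18 * ((A + B) * (A' + B')) / sqrt \<bar>\<eta>\<bar>" using key s0 by (intro divide_right_mono) auto
  also have "\<dots> = 18 / sqrt \<bar>\<eta>\<bar> * (A + B) * (A' + B')" by simp
  finally have nb: "norm (L2 + L1) \<le> 18 / sqrt \<bar>\<eta>\<bar> * (A + B) * (A' + B')" .
  with lim show "\<exists>L. (Ktrunc f g \<eta> \<longlongrightarrow> L) at_top \<and> norm L \<le> 18 / sqrt \<bar>\<eta>\<bar> * (A + B) * (A' + B')"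
    by blast
qed



end
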